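(* For all integers $q\ge1$ and $t\ge0$, $\mathsf{DEL}_{\mathrm{cor}}(q,2t)\le \mathsf{INDEL}_{\mathrm{cor}}(q,t)\le \mathsf{DEL}_{\mathrm{cor}}(q,t).$
   Context: Let $[q]=\{0,1,\dots,q-1\}$. For $1\le m\le q$, a partial permutation of length $m$ over $[q]$ is a sequence $\pi=(\pi_1,\dots,\pi_m)$ of $m$ pairwise distinct elements of $[q]$. Let $\mathcal{S}_m^q$ be the set of those of length $m$ and $\mathcal{S}_{\mathrm{all}}^q=\bigcup_{m=1}^{q}\mathcal{S}_m^q$. A code is any subset of $\mathcal{S}_{\mathrm{all}}^q$. For $\pi$ of length $m$ and integer $j\ge 0$, $\pi_{\downarrow j}=(\pi_{k+1},\dots,\pi_m)$ with $k=\min(j,m-1)$; $\mathcal{B}_{\mathrm{del}}^t(\pi)=\{\pi_{\downarrow j}:0\le j\le t\}$. $\mathcal{B}_{\mathrm{indel}}^t(\pi)$ is the set of all partial permutations obtainable from $\pi$ by at most $t$ operations, each either a single tail deletion (removing the first symbol of a partial permutation of length at least $2$) or a single tail insertion (prepending an element of $[q]$ not already occurring). For $X\in\{\mathrm{del},\mathrm{indel}\}$, a code $\mathcal{C}$ is $t$-tail-$X$-correcting if $\mathcal{B}_X^t(\pi_1)\cap\mathcal{B}_X^t(\pi_2)=\emptyset$ for all distinct $\pi_1,\pi_2\in\mathcal{C}$. $\mathsf{DEL}_{\mathrm{cor}}(q,t)$ and $\mathsf{INDEL}_{\mathrm{cor}}(q,t)$ denote the maximum sizes of $t$-tail-deletion-correcting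 and $t$-tail-indel-correcting codes in $\mathcal{S}_{\mathrm{all}}^q$. *)

theory Defs
  imports Main
begin

text \<open>Partial permutations over [q] = {0..<q} are represented as lists.\<close>

definition pperm :: "nat \<Rightarrow> nat list \<Rightarrow> bool" where
  "pperm q \<pi> \<longleftrightarrow> distinct \<pi> \<and> set \<pi> \<subseteq> {..<q} \<and> 1 \<le> length \<pi> \<and> length \<pi> \<le> q"

definition S_all :: "nat \<Rightarrow> nat list set" where
  "S_all q = {\<pi>. pperm q \<pi>}"

definition tail_del :: "nat list \<Rightarrow> nat \<Rightarrow> nat list" where
  "tail_del \<pi> j = drop (min j (length \<pi> - 1)) \<pi>"

definition del_ball :: "nat \<Rightarrow> nat list \<Rightarrow> nat list set" where
  "del_ball t \<pi> = {tail_del \<pi> j | j. j \<le> t}"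

definition indel_step :: "nat \<Rightarrow> nat list \<Rightarrow> nat list \<Rightarrow> bool" where
  "indel_step q \<pi> \<sigma> \<longleftrightarrow>
     (2 \<le> length \<pi> \<and> \<sigma> = tl \<pi>) \<or> (\<exists>a. a < q \<and> a \<notin> set \<pi> \<and> \<sigma> = a # \<pi>)"

definition indel_ball :: "nat \<Rightarrow> nat \<Rightarrow> nat list \<Rightarrow> nat list set" where
  "indel_ball q t \<pi> = {\<sigma>. \<exists>k\<le>t. (indel_step q ^^ k) \<pi> \<sigma>}"

definition del_correcting :: "nat \<Rightarrow> nat \<Rightarrow> nat list set \<Rightarrow> bool" where
  "del_correcting q t C \<longleftrightarrow> C \<subseteq> S_all q \<and>
     (\<forall>\<pi>1\<in>C. \<forall>\<pi>2\<in>C. \<pi>1 \<noteq> \<pi>2 \<longrightarrow> del_ball t \<pi>1 \<inter> del_ball t \<pi>2 = {})"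

definition indel_correcting :: "nat \<Rightarrow> nat \<Rightarrow> nat list set \<Rightarrow> bool" where
  "indel_correcting q t C \<longleftrightarrow> C \<subseteq> S_all q \<and>
     (\<forall>\<pi>1\<in>C. \<forall>\<pi>2\<in>C. \<pi>1 \<noteq> \<pi>2 \<longrightarrow> indel_ball q t \<pi>1 \<inter> indel_ball q t \<pi>2 = {})"

definition DEL_cor :: "nat \<Rightarrow> nat \<Rightarrow> nat" where
  "DEL_cor q t = Max (card ` {C. del_correcting q t C})"

definition INDEL_cor :: "nat \<Rightarrow> nat \<Rightarrow> nat" where
  "INDEL_cor q t = Max (card ` {C. indel_correcting q t C})"

end

theory Submission
  imports Defs
begin

lemma finite_S_all: "finite (S_all q)"
proof -
  have "S_all q \<subseteq> {xs. set xs \<subseteq> {..<q} \<and> length xs \<le> q}"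
    by (auto simp: S_all_def pperm_def)
  moreover have "finite {xs. set xs \<subseteq> {..<q} \<and> length xs \<le> q}"
    by (rule finite_lists_length_le) simp
  ultimately show ?thesis by (rule finite_subset)
qed

lemma finite_del: "finite {C. del_correcting q t C}"
  by (rule finite_subset[of _ "Pow (S_all q)"]) (auto simp: del_correcting_def finite_S_all)

lemma finite_indel: "finite {C. indel_correcting q t C}"
  by (rule finite_subset[of _ "Pow (S_all q)"]) (auto simp: indel_correcting_def finite_S_all)

lemma tl_pow: "j < length \<pi> \<Longrightarrow> (indel_step q ^^ j) \<pi> (drop j \<pi>)"
proof (induction j)
  case 0 then show ?case by simp
next
  case (Suc j)
  have "indel_step q (drop j \<pi>) (drop (Suc j) \<pi>)"
    using Suc.prems by (auto simp: indel_step_def drop_Suc tl_drop)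
  with Suc show ?case by auto
qed

lemma del_sub_indel: "del_ball t \<pi> \<subseteq> indel_ball q t \<pi>"
proof
  fix \<sigma> assume "\<sigma> \<in> del_ball t \<pi>"
  then obtain j where j: "j \<le> t" "\<sigma> = tail_del \<pi> j" by (auto simp: del_ball_def)
  show "\<sigma> \<in> indel_ball q t \<pi>"
  proof (cases "\<pi> = []")
    case True
    then have "\<sigma> = \<pi>" using j by (simp add: tail_del_def)
    then show ?thesis by (auto simp: indel_ball_def intro: exI[of _ 0])
  next
    case False
    have lt: "min j (length \<pi> - 1) < length \<pi>" using False
      by (metis length_greater_0_conv diff_less min.cobounded2 le_less_trans zero_less_one)
    have "(indel_step q ^^ (min j (length \<pi> - 1))) \<pi> \<sigma>"
      using j lt tl_pow[OF lt, of q] by (simp add: tail_del_def)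
    then show ?thesis using j unfolding indel_ball_def by (intro CollectI exI[of _ "min j (length \<pi> - 1)"]) auto
  qed
qed

lemma indel_inv:
  assumes "(indel_step q ^^ k) \<pi> \<sigma>" "0 < length \<pi>"
  shows "\<exists>d l. d + l \<le> k \<and> d < length \<pi> \<and> drop l \<sigma> = drop d \<pi>"
  using assms(1)
proof (induction k arbitrary: \<sigma>)
  case 0 then show ?case using assms(2) by (auto intro!: exI[of _ 0])
next
  case (Suc k)
  then obtain \<rho> where r: "(indel_step q ^^ k) \<pi> \<rho>" "indel_step q \<rho> \<sigma>" by auto
  then obtain d l where dl: "d + l \<le> k" "d < length \<pi>" "drop l \<rho> = drop d \<pi>"
    using Suc.IH by blast
  from r(2) show ?case unfolding indel_step_def
  proof (elim disjE exE conjE)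
    assume h: "2 \<le> length \<rho>" "\<sigma> = tl \<rho>"
    show ?thesis
    proof (cases l)
      case 0
      then have "\<rho> = drop d \<pi>" using dl by simp
      then have "Suc d < length \<pi>" using h by simp
      moreover have "drop 0 \<sigma> = drop (Suc d) \<pi>" using h \<open>\<rho> = drop d \<pi>\<close> by (simp add: drop_Suc tl_drop)
      ultimately show ?thesis using dl by (intro exI[of _ "Suc d"] exI[of _ 0]) auto
    next
      case (Suc l')
      have "drop l' \<sigma> = drop d \<pi>" using h dl Suc by (simp add: drop_Suc tl_drop)
      then show ?thesis using dl Suc by (intro exI[of _ d] exI[of _ l']) auto
    qed
  next
    fix a assume h: "a < q" "a \<notin> set \<rho>" "\<sigma> = a # \<rho>"
    have "drop (Suc l) \<sigma> = drop d \<pi>" using h dl by simp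
    then show ?thesis using dl by (intro exI[of _ d] exI[of _ "Suc l"]) auto
  qed
qed

lemma tail_del_drop: "d < length \<pi> \<Longrightarrow> tail_del \<pi> d = drop d \<pi>"
  by (simp add: tail_del_def min_def) arith

lemma cross:
  assumes "d1 + l1 \<le> t" "d1 < length \<pi>1" "drop l1 \<sigma> = drop d1 \<pi>1"
    "d2 + l2 \<le> t" "d2 < length \<pi>2" "drop l2 \<sigma> = drop d2 \<pi>2" "l2 \<le> l1"
  shows "del_ball (2*t) \<pi>1 \<inter> del_ball (2*t) \<pi>2 \<noteq> {}"
proof -
  have "drop l1 \<sigma> = drop (l1 - l2) (drop l2 \<sigma>)" using assms(7) by simp
  also have "\<dots> = drop (l1 - l2 + d2) \<pi>2" using assms(6) by simp
  finally have e: "drop d1 \<pi>1 = drop (l1 - l2 + d2) \<pi>2" using assms(3) by simp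
  have "drop d1 \<pi>1 \<noteq> []" using assms(2) by simp
  then have lt: "l1 - l2 + d2 < length \<pi>2" using e by (metis drop_all not_le)
  have "drop d1 \<pi>1 \<in> del_ball (2*t) \<pi>1"
    unfolding del_ball_def using assms(1,2) tail_del_drop[of d1 \<pi>1]
    by (intro CollectI exI[of _ d1]) auto
  moreover have "drop d1 \<pi>1 \<in> del_ball (2*t) \<pi>2"
    unfolding del_ball_def using assms(1,4) lt e tail_del_drop[of "l1 - l2 + d2" \<pi>2]
    by (intro CollectI exI[of _ "l1 - l2 + d2"]) auto
  ultimately show ?thesis by blast
qed

lemma del2_indel:
  assumes "del_correcting q (2*t) C" shows "indel_correcting q t C"
  unfolding indel_correcting_def
proof (intro conjI ballI impI)
  show "C \<subseteq> S_all q" using assms by (simp add: del_correcting_def)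
  fix \<pi>1 \<pi>2 assume p: "\<pi>1 \<in> C" "\<pi>2 \<in> C" "\<pi>1 \<noteq> \<pi>2"
  have len: "0 < length \<pi>1" "0 < length \<pi>2" using p assms
    by (auto simp: del_correcting_def S_all_def pperm_def)
  have dis: "del_ball (2*t) \<pi>1 \<inter> del_ball (2*t) \<pi>2 = {}"
    using assms p by (auto simp: del_correcting_def)
  show "indel_ball q t \<pi>1 \<inter> indel_ball q t \<pi>2 = {}"
  proof (rule ccontr)
    assume "indel_ball q t \<pi>1 \<inter> indel_ball q t \<pi>2 \<noteq> {}"
    then obtain \<sigma> k1 k2 where s: "k1 \<le> t" "(indel_step q ^^ k1) \<pi>1 \<sigma>"
      "k2 \<le> t" "(indel_step q ^^ k2) \<pi>2 \<sigma>"
      by (auto simp: indel_ball_def)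
    obtain d1 l1 where a: "d1 + l1 \<le> t" "d1 < length \<pi>1" "drop l1 \<sigma> = drop d1 \<pi>1"
      using indel_inv[OF s(2) len(1)] s(1) by (meson le_trans)
    obtain d2 l2 where b: "d2 + l2 \<le> t" "d2 < length \<pi>2" "drop l2 \<sigma> = drop d2 \<pi>2"
      using indel_inv[OF s(4) len(2)] s(3) by (meson le_trans)
    show False
    proof (cases "l2 \<le> l1")
      case True
      from cross[OF a b True] dis show False by simp
    next
      case False
      from cross[OF b a] False dis show False by auto
    qed
  qed
qed

lemma indel_del:
  assumes "indel_correcting q t C" shows "del_correcting q t C"
  using assms del_sub_indel[of t _ q]
  unfolding indel_correcting_def del_correcting_def by blast

theorem mainTheorem7:
  fixes q t :: nat
  assumes "1 \<le> q"
  shows "DEL_cor q (2 * t) \<le> INDEL_cor q t \<and> INDEL_cor q t \<le> DEL_cor q t"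
proof
  have ne1: "{} \<in> {C. del_correcting q (2*t) C}" by (simp add: del_correcting_def)
  show "DEL_cor q (2 * t) \<le> INDEL_cor q t"
    unfolding DEL_cor_def INDEL_cor_def
  proof (rule Max.boundedI)
    show "finite (card ` {C. del_correcting q (2 * t) C})" using finite_del by simp
    show "card ` {C. del_correcting q (2 * t) C} \<noteq> {}" using ne1 by blast
    fix a assume "a \<in> card ` {C. del_correcting q (2 * t) C}"
    then obtain C where "a = card C" "del_correcting q (2*t) C" by auto
    then show "a \<le> Max (card ` {C. indel_correcting q t C})"
      using del2_indel finite_indel by (intro Max_ge) auto
  qed
  have ne2: "{} \<in> {C. indel_correcting q t C}" by (simp add: indel_correcting_def)
  show "INDEL_cor q t \<le> DEL_cor q t"
    unfolding DEL_cor_def INDEL_cor_def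
  proof (rule Max.boundedI)
    show "finite (card ` {C. indel_correcting q t C})" using finite_indel by simp
    show "card ` {C. indel_correcting q t C} \<noteq> {}" using ne2 by blast
    fix a assume "a \<in> card ` {C. indel_correcting q t C}"
    then obtain C where "a = card C" "indel_correcting q t C" by auto
    then show "a \<le> Max (card ` {C. del_correcting q t C})"
      using indel_del finite_del by (intro Max_ge) auto
  qed
qed

end
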